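(* Let $\beta_0>0$ and let $(X_{k,j})_{k\in\mathbb{N},\,j\in\{1,\dots,2^k\}}$ be real random variables such that: (i) $\mathbb{E}[\exp(\beta_0|X_{0,1}|)]<\infty$ and $\mathbb{E}[X_{0,1}]=0$; (ii) for all $k,j$, $X_{k,j}$ has the same distribution as $2^{-k}X_{0,1}$; (iii) for each fixed $k$, the variables $(X_{k,j})_{1\le j\le2^k}$ are independent. Then $\sum_{k=0}^n\sum_{j=1}^{2^k}X_{k,j}$ converges almost surely as $n\to\infty$, and its limit $X$ satisfies $\mathbb{E}[\exp(\beta X)]<\infty$ for every $\beta$ with $|\beta|<\beta_0/2$. *)

theory Defs
  imports "HOL-Probability.Probability"
begin

end

theory Submission
  imports Defs
begin

lemma exp_taylor2: "exp (x::real) \<le> 1 + x + x^2/2 * exp \<bar>x\<bar>"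
proof -
  obtain t where t: "\<bar>t\<bar> \<le> \<bar>x\<bar>" "exp x = (\<Sum>m<2. x^m / fact m) + (exp t / fact 2) * x^2"
    using Maclaurin_exp_le[of x 2] by blast
  have "exp t \<le> exp \<bar>x\<bar>" using t(1) by simp
  hence "exp t / 2 * x^2 \<le> exp \<bar>x\<bar> / 2 * x^2" by (intro mult_right_mono) auto
  thus ?thesis using t(2) by (simp add: numeral_2_eq_2 mult_ac)
qed

lemma exp_ge_third: assumes "(z::real) \<ge> 0" shows "z^2/2 \<le> exp z"
proof -
  obtain t where t: "\<bar>t\<bar> \<le> \<bar>z\<bar>" "exp z = (\<Sum>m<3. z^m / fact m) + (exp t / fact 3) * z^3"
    using Maclaurin_exp_le[of z 3] by blast
  have "0 \<le> (exp t / fact 3) * z^3" using assms by simp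
  thus ?thesis using t(2) assms by (simp add: numeral_3_eq_3 eval_nat_numeral)
qed

lemma cosh_ge: "2 + (x::real)^2 \<le> exp x + exp (-x)"
proof -
  have *: "1 + y + y^2/2 + y^3/6 \<le> exp y" for y :: real
  proof -
    obtain t where t: "\<bar>t\<bar> \<le> \<bar>y\<bar>" "exp y = (\<Sum>m<4. y^m / fact m) + (exp t / fact 4) * y^4"
      using Maclaurin_exp_le[of y 4] by blast
    have "0 \<le> (exp t / fact 4) * y^4" by simp
    thus ?thesis using t(2) by (simp add: eval_nat_numeral)
  qed
  from *[of x] *[of "-x"] show ?thesis by (simp add: power2_eq_square power3_eq_cube)
qed

lemma sq_le_exp: assumes "(d::real) > 0" shows "y^2 \<le> 2/d^2 * exp (d * \<bar>y\<bar>)"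
proof -
  have "(d*\<bar>y\<bar>)^2/2 \<le> exp (d*\<bar>y\<bar>)" using assms by (intro exp_ge_third) simp
  hence "d^2 * y^2 \<le> 2 * exp (d*\<bar>y\<bar>)" by (simp add: power_mult_distrib)
  thus ?thesis using assms by (simp add: field_simps)
qed

lemma exp_minus_one_le: assumes "(a::real) \<ge> 0" shows "exp a - 1 \<le> a * exp a"
proof -
  have "1 - a \<le> exp (-a)" using exp_ge_add_one_self[of "-a"] by simp
  hence "(1 - a) * exp a \<le> exp (-a) * exp a" by (intro mult_right_mono) auto
  thus ?thesis by (simp add: exp_minus field_simps)
qed

lemma exp_convex_sum:
  fixes w z :: "nat \<Rightarrow> real"
  assumes "\<And>k. k \<le> n \<Longrightarrow> 0 \<le> w k" "(\<Sum>k\<le>n. w k) \<le> 1"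
  shows "exp (\<Sum>k\<le>n. w k * z k) \<le> (\<Sum>k\<le>n. w k * exp (z k)) + (1 - (\<Sum>k\<le>n. w k))"
proof -
  define a where "a k = (if k \<le> n then w k else 1 - (\<Sum>k\<le>n. w k))" for k
  define y where "y k = (if k \<le> n then z k else 0)" for k
  have s1: "(\<Sum>k\<le>n. a k) = (\<Sum>k\<le>n. w k)" by (rule sum.cong) (auto simp: a_def)
  have s2: "(\<Sum>k\<le>n. a k * y k) = (\<Sum>k\<le>n. w k * z k)" by (rule sum.cong) (auto simp: a_def y_def)
  have s3: "(\<Sum>k\<le>n. a k * exp (y k)) = (\<Sum>k\<le>n. w k * exp (z k))" by (rule sum.cong) (auto simp: a_def y_def)
  have "exp (\<Sum>k\<in>{..Suc n}. a k *\<^sub>R y k) \<le> (\<Sum>k\<in>{..Suc n}. a k * exp (y k))"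
    by (rule convex_on_sum[OF _ _ exp_convex]) (auto simp: s1 a_def assms)
  thus ?thesis using s1 s2 s3 by (simp add: a_def y_def)
qed

context prob_space begin

lemma nn_bound_integrable:
  assumes f: "f \<in> borel_measurable M" "\<And>\<omega>. 0 \<le> f \<omega>"
    and b: "(\<integral>\<^sup>+\<omega>. ennreal (f \<omega>) \<partial>M) \<le> ennreal b" "0 \<le> b"
  shows "integrable M f" "integral\<^sup>L M f \<le> b"
proof -
  show int: "integrable M f"
  proof (unfold integrable_iff_bounded, intro conjI)
    have "(\<integral>\<^sup>+\<omega>. ennreal (norm (f \<omega>)) \<partial>M) = (\<integral>\<^sup>+\<omega>. ennreal (f \<omega>) \<partial>M)"
      using f(2) by simp
    also have "\<dots> < \<infinity>" using b(1) by (simp add: le_less_trans[OF _ ennreal_less_top])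
    finally show "(\<integral>\<^sup>+\<omega>. ennreal (norm (f \<omega>)) \<partial>M) < \<infinity>" .
  qed (rule f(1))
  have "ennreal (integral\<^sup>L M f) = (\<integral>\<^sup>+\<omega>. ennreal (f \<omega>) \<partial>M)"
    using int f by (intro nn_integral_eq_integral[symmetric]) auto
  hence "ennreal (integral\<^sup>L M f) \<le> ennreal b" using b(1) by simp
  thus "integral\<^sup>L M f \<le> b" by (simp only: ennreal_le_iff[OF b(2)])
qed

lemma mgf_bound:
  fixes Y :: "'a \<Rightarrow> real"
  assumes Y: "Y \<in> borel_measurable M" "integrable M (\<lambda>\<omega>. exp (\<beta>0 * \<bar>Y \<omega>\<bar>))"
    "integrable M Y" "expectation Y = 0" and \<rho>: "0 < \<rho>" "\<rho> < \<beta>0" and u: "\<bar>u\<bar> \<le> \<rho>"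
  shows "integrable M (\<lambda>\<omega>. Y \<omega>^2 * exp (\<rho> * \<bar>Y \<omega>\<bar>) / 2)"
    "(\<integral>\<^sup>+\<omega>. ennreal (exp (u * Y \<omega>)) \<partial>M)
       \<le> ennreal (1 + u^2 * expectation (\<lambda>\<omega>. Y \<omega>^2 * exp (\<rho> * \<bar>Y \<omega>\<bar>) / 2))"
proof -
  define g where "g \<omega> = Y \<omega>^2 * exp (\<rho> * \<bar>Y \<omega>\<bar>) / 2" for \<omega>
  have I1: "integrable M (\<lambda>\<omega>. 1/(\<beta>0-\<rho>)^2 * exp (\<beta>0 * \<bar>Y \<omega>\<bar>))"
    using Y by auto
  have N1: "norm (g \<omega>) \<le> norm (1/(\<beta>0-\<rho>)^2 * exp (\<beta>0 * \<bar>Y \<omega>\<bar>))" for \<omega>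
  proof -
    have "Y \<omega>^2 \<le> 2/(\<beta>0-\<rho>)^2 * exp ((\<beta>0-\<rho>) * \<bar>Y \<omega>\<bar>)" using \<rho> by (intro sq_le_exp) auto
    hence "Y \<omega>^2 * exp (\<rho> * \<bar>Y \<omega>\<bar>) \<le> 2/(\<beta>0-\<rho>)^2 * exp ((\<beta>0-\<rho>) * \<bar>Y \<omega>\<bar>) * exp (\<rho> * \<bar>Y \<omega>\<bar>)"
      by (intro mult_right_mono) auto
    also have "\<dots> = 2/(\<beta>0-\<rho>)^2 * exp (\<beta>0 * \<bar>Y \<omega>\<bar>)"
      by (simp add: mult.assoc exp_add[symmetric] algebra_simps)
    finally show ?thesis by (simp add: g_def mult.commute)
  qed
  have gI: "integrable M g"
    by (rule Bochner_Integration.integrable_bound[OF I1 _ AE_I2[OF N1]]) (use Y in \<open>auto simp: g_def[abs_def]\<close>)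
  thus gi: "integrable M (\<lambda>\<omega>. Y \<omega>^2 * exp (\<rho> * \<bar>Y \<omega>\<bar>) / 2)"
    by (simp add: g_def[abs_def])
  have pt: "exp (u * y) \<le> 1 + u * y + u^2 * (y^2 * exp (\<rho> * \<bar>y\<bar>) / 2)" for y
  proof -
    have "\<bar>u*y\<bar> \<le> \<rho> * \<bar>y\<bar>" using u by (simp add: abs_mult mult_right_mono)
    hence "exp \<bar>u*y\<bar> \<le> exp (\<rho> * \<bar>y\<bar>)" by simp
    hence "(u*y)^2/2 * exp \<bar>u*y\<bar> \<le> (u*y)^2/2 * exp (\<rho> * \<bar>y\<bar>)" by (intro mult_left_mono) auto
    with exp_taylor2[of "u*y"] show ?thesis by (simp add: power_mult_distrib mult_ac)
  qed
  have i2: "integrable M (\<lambda>\<omega>. 1 + u * Y \<omega> + u^2 * g \<omega>)"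
    by (intro Bochner_Integration.integrable_add integrable_mult_right integrable_const gI Y(3))
  have "(\<integral>\<^sup>+\<omega>. ennreal (exp (u * Y \<omega>)) \<partial>M) \<le> (\<integral>\<^sup>+\<omega>. ennreal (1 + u * Y \<omega> + u^2 * g \<omega>) \<partial>M)"
    unfolding g_def by (intro nn_integral_mono ennreal_leI pt)
  also have "\<dots> = ennreal (\<integral>\<omega>. 1 + u * Y \<omega> + u^2 * g \<omega> \<partial>M)"
  proof (rule nn_integral_eq_integral[OF i2])
    show "AE x in M. 0 \<le> 1 + u * Y x + u\<^sup>2 * g x"
      using pt by (auto intro: order_trans[OF less_imp_le[OF exp_gt_zero]] simp: g_def)
  qed
  also have "(\<integral>\<omega>. 1 + u * Y \<omega> + u^2 * g \<omega> \<partial>M) = 1 + u^2 * expectation g"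
    using gI Y by (simp add: Bochner_Integration.integral_add prob_space)
  finally show "(\<integral>\<^sup>+\<omega>. ennreal (exp (u * Y \<omega>)) \<partial>M)
       \<le> ennreal (1 + u^2 * expectation (\<lambda>\<omega>. Y \<omega>^2 * exp (\<rho> * \<bar>Y \<omega>\<bar>) / 2))"
    by (simp only: g_def[abs_def, symmetric])
qed

lemma level_mgf:
  fixes Y :: "'a \<Rightarrow> real" and Z :: "nat \<Rightarrow> 'a \<Rightarrow> real" and k :: nat
  assumes Y: "Y \<in> borel_measurable M" "integrable M (\<lambda>\<omega>. exp (\<beta>0 * \<bar>Y \<omega>\<bar>))"
    "integrable M Y" "expectation Y = 0" and \<rho>: "0 < \<rho>" "\<rho> < \<beta>0"
   and Zm: "\<And>j. j \<in> {1..2^k} \<Longrightarrow> Z j \<in> borel_measurable M"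
   and Zd: "\<And>j. j \<in> {1..2^k} \<Longrightarrow> distr M borel (Z j) = distr M borel (\<lambda>\<omega>. Y \<omega> / 2^k)"
   and Zi: "indep_vars (\<lambda>_. borel) Z {1..2^k}"
   and t: "\<bar>t\<bar> \<le> \<rho> * 2^k"
  shows "(\<integral>\<^sup>+\<omega>. ennreal (exp (t * (\<Sum>j=1..2^k. Z j \<omega>))) \<partial>M)
     \<le> ennreal (exp (expectation (\<lambda>\<omega>. Y \<omega>^2 * exp (\<rho> * \<bar>Y \<omega>\<bar>) / 2) * t^2 / 2^k))"
proof -
  define C where "C = expectation (\<lambda>\<omega>. Y \<omega>^2 * exp (\<rho> * \<bar>Y \<omega>\<bar>) / 2)"
  have C0: "C \<ge> 0" unfolding C_def by (intro integral_nonneg_AE) auto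
  define u :: real where "u = t / 2^k"
  have u: "\<bar>u\<bar> \<le> \<rho>" using t by (simp add: u_def abs_divide field_simps)
  have each: "(\<integral>\<^sup>+\<omega>. ennreal (exp (t * Z j \<omega>)) \<partial>M) \<le> ennreal (1 + u^2 * C)"
    if j: "j \<in> {1..2^k}" for j
  proof -
    have "(\<integral>\<^sup>+\<omega>. ennreal (exp (t * Z j \<omega>)) \<partial>M) = (\<integral>\<^sup>+x. ennreal (exp (t * x)) \<partial>distr M borel (Z j))"
      using Zm[OF j] by (subst nn_integral_distr) auto
    also have "\<dots> = (\<integral>\<^sup>+x. ennreal (exp (t * x)) \<partial>distr M borel (\<lambda>\<omega>. Y \<omega> / 2^k))"
      using Zd[OF j] by simp
    also have "\<dots> = (\<integral>\<^sup>+\<omega>. ennreal (exp (u * Y \<omega>)) \<partial>M)"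
      using Y(1) by (subst nn_integral_distr) (auto simp: u_def)
    also have "\<dots> \<le> ennreal (1 + u^2 * C)"
      unfolding C_def by (rule mgf_bound(2)[OF Y \<rho> u])
    finally show ?thesis .
  qed
  have "(\<integral>\<^sup>+\<omega>. ennreal (exp (t * (\<Sum>j=1..2^k. Z j \<omega>))) \<partial>M)
      = (\<integral>\<^sup>+\<omega>. (\<Prod>j\<in>{1..2^k}. ennreal (exp (t * Z j \<omega>))) \<partial>M)"
    by (intro nn_integral_cong) (simp add: sum_distrib_left exp_sum prod_ennreal)
  also have "\<dots> = (\<Prod>j\<in>{1..2^k}. \<integral>\<^sup>+\<omega>. ennreal (exp (t * Z j \<omega>)) \<partial>M)"
    by (intro indep_vars_nn_integral indep_vars_compose2[OF Zi]) auto
  also have "\<dots> \<le> (\<Prod>j\<in>{1..(2::nat)^k}. ennreal (1 + u^2 * C))"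
    by (intro prod_mono_ennreal each) auto
  also have "\<dots> = ennreal ((1 + u^2 * C) ^ 2^k)"
    using C0 by (simp del: ennreal_plus add: ennreal_power)
  also have "\<dots> \<le> ennreal (exp (u^2 * C) ^ 2^k)"
    using C0 by (intro ennreal_leI power_mono) (auto simp: exp_ge_add_one_self add_nonneg_nonneg)
  also have "exp (u^2 * C) ^ 2^k = exp (of_nat (2^k) * (u^2 * C))"
    by (rule exp_of_nat_mult[symmetric])
  also have "of_nat (2^k) * (u^2 * C) = C * t^2 / 2^k"
    by (simp add: u_def power_divide field_simps power_mult[symmetric] power_mult_distrib mult.commute[of k] power2_eq_square power_add[symmetric] mult_2_right)
  finally show ?thesis by (simp add: C_def)
qed

lemma second_moment:
  fixes S :: "'a \<Rightarrow> real"
  assumes S: "S \<in> borel_measurable M" and \<rho>: "\<rho> > 0" and a: "a \<ge> 0"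
    and p: "(\<integral>\<^sup>+\<omega>. ennreal (exp (\<rho> * S \<omega>)) \<partial>M) \<le> ennreal (exp a)"
    and n: "(\<integral>\<^sup>+\<omega>. ennreal (exp (- \<rho> * S \<omega>)) \<partial>M) \<le> ennreal (exp a)"
  shows "integrable M (\<lambda>\<omega>. S \<omega>^2)" "expectation (\<lambda>\<omega>. S \<omega>^2) \<le> 2 * a * exp a / \<rho>^2"
proof -
  have ip: "integrable M (\<lambda>\<omega>. exp (\<rho> * S \<omega>))" "expectation (\<lambda>\<omega>. exp (\<rho> * S \<omega>)) \<le> exp a"
    using nn_bound_integrable[OF _ _ p] S by auto
  have in': "integrable M (\<lambda>\<omega>. exp (- \<rho> * S \<omega>))" "expectation (\<lambda>\<omega>. exp (- \<rho> * S \<omega>)) \<le> exp a"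
    using nn_bound_integrable[OF _ _ n] S by auto
  have pt: "S \<omega>^2 \<le> (exp (\<rho> * S \<omega>) + exp (- \<rho> * S \<omega>) - 2) / \<rho>^2" for \<omega>
    using cosh_ge[of "\<rho> * S \<omega>"] \<rho> by (simp add: field_simps power_mult_distrib)
  have iq: "integrable M (\<lambda>\<omega>. (exp (\<rho> * S \<omega>) + exp (- \<rho> * S \<omega>) - 2) / \<rho>^2)"
    using ip in' by (intro integrable_divide Bochner_Integration.integrable_diff Bochner_Integration.integrable_add integrable_const) auto
  have nb: "norm (S \<omega>^2) \<le> norm ((exp (\<rho> * S \<omega>) + exp (- \<rho> * S \<omega>) - 2) / \<rho>^2)" for \<omega>
  proof -
    have "0 \<le> (exp (\<rho> * S \<omega>) + exp (- \<rho> * S \<omega>) - 2) / \<rho>^2"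
      using pt[of \<omega>] by (metis zero_le_power2 order_trans)
    thus ?thesis using pt[of \<omega>] by (simp only: real_norm_def abs_of_nonneg zero_le_power2)
  qed
  show is2: "integrable M (\<lambda>\<omega>. S \<omega>^2)"
    by (rule Bochner_Integration.integrable_bound[OF iq _ AE_I2[OF nb]]) (use S in auto)
  have "expectation (\<lambda>\<omega>. S \<omega>^2) \<le> expectation (\<lambda>\<omega>. (exp (\<rho> * S \<omega>) + exp (- \<rho> * S \<omega>) - 2) / \<rho>^2)"
    by (intro integral_mono is2 iq pt)
  also have "\<dots> = (expectation (\<lambda>\<omega>. exp (\<rho> * S \<omega>)) + expectation (\<lambda>\<omega>. exp (- \<rho> * S \<omega>)) - 2) / \<rho>^2"
    using ip in' by (simp add: Bochner_Integration.integral_diff Bochner_Integration.integral_add prob_space)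
  also have "\<dots> \<le> (2 * exp a - 2) / \<rho>^2"
    using ip in' \<rho> by (intro divide_right_mono) auto
  also have "\<dots> \<le> 2 * a * exp a / \<rho>^2"
    using exp_minus_one_le[OF a] by (intro divide_right_mono) auto
  finally show "expectation (\<lambda>\<omega>. S \<omega>^2) \<le> 2 * a * exp a / \<rho>^2" .
qed

lemma abs_moment:
  fixes S :: "'a \<Rightarrow> real"
  assumes S: "S \<in> borel_measurable M" and i: "integrable M (\<lambda>\<omega>. S \<omega>^2)"
    and V: "expectation (\<lambda>\<omega>. S \<omega>^2) \<le> V" and e: "\<epsilon> > 0"
  shows "integrable M (\<lambda>\<omega>. \<bar>S \<omega>\<bar>)" "expectation (\<lambda>\<omega>. \<bar>S \<omega>\<bar>) \<le> \<epsilon>/2 + V/(2*\<epsilon>)"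
proof -
  have pt: "\<bar>s\<bar> \<le> \<epsilon>/2 + s^2/(2*\<epsilon>)" for s :: real
  proof -
    have "0 \<le> (\<bar>s\<bar> - \<epsilon>)^2" by simp
    hence "2*\<epsilon>*\<bar>s\<bar> \<le> \<epsilon>^2 + s^2" by (simp add: power2_eq_square algebra_simps)
    thus ?thesis using e by (simp add: field_simps power2_eq_square)
  qed
  have iq: "integrable M (\<lambda>\<omega>. \<epsilon>/2 + S \<omega>^2/(2*\<epsilon>))"
    using i by (intro Bochner_Integration.integrable_add integrable_divide integrable_const) auto
  show ia: "integrable M (\<lambda>\<omega>. \<bar>S \<omega>\<bar>)"
    by (rule Bochner_Integration.integrable_bound[OF iq]) (use S pt e in \<open>auto intro!: AE_I2 simp del: power_divide\<close>)
  have "expectation (\<lambda>\<omega>. \<bar>S \<omega>\<bar>) \<le> expectation (\<lambda>\<omega>. \<epsilon>/2 + S \<omega>^2/(2*\<epsilon>))"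
    by (intro integral_mono ia iq pt)
  also have "\<dots> = \<epsilon>/2 + expectation (\<lambda>\<omega>. S \<omega>^2)/(2*\<epsilon>)"
    using i by (simp add: Bochner_Integration.integral_add prob_space)
  also have "\<dots> \<le> \<epsilon>/2 + V/(2*\<epsilon>)"
    using V e by (intro add_left_mono divide_right_mono) auto
  finally show "expectation (\<lambda>\<omega>. \<bar>S \<omega>\<bar>) \<le> \<epsilon>/2 + V/(2*\<epsilon>)" .
qed

end


theorem proposition9p1:
  fixes M :: "'a measure" and X :: "nat \<Rightarrow> nat \<Rightarrow> 'a \<Rightarrow> real" and \<beta>0 :: real
  assumes "prob_space M"
    and "\<beta>0 > 0"
    and meas: "\<And>k j. j \<in> {1..2^k} \<Longrightarrow> X k j \<in> borel_measurable M"
    and "integrable M (\<lambda>\<omega>. exp (\<beta>0 * \<bar>X 0 1 \<omega>\<bar>))"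
    and "integrable M (X 0 1)"
    and "prob_space.expectation M (X 0 1) = 0"
    and "\<And>k j. j \<in> {1..2^k} \<Longrightarrow>
           distr M borel (X k j) = distr M borel (\<lambda>\<omega>. X 0 1 \<omega> / 2^k)"
    and "\<And>k. prob_space.indep_vars M (\<lambda>_. borel) (X k) {1..2^k}"
  shows "(AE \<omega> in M. convergent (\<lambda>n. \<Sum>k\<le>n. \<Sum>j=1..2^k. X k j \<omega>))
         \<and> (\<forall>\<beta>::real. \<bar>\<beta>\<bar> < \<beta>0 / 2 \<longrightarrow>
              integrable M (\<lambda>\<omega>. exp (\<beta> * lim (\<lambda>n. \<Sum>k\<le>n. \<Sum>j=1..2^k. X k j \<omega>))))"
proof -
  interpret prob_space M by fact
  have b0: "\<beta>0 > 0" by fact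
  define Y where "Y = X 0 1"
  have Ym: "Y \<in> borel_measurable M" using meas[of 1 0] by (simp add: Y_def)
  have Yi: "integrable M (\<lambda>\<omega>. exp (\<beta>0 * \<bar>Y \<omega>\<bar>))" "integrable M Y" "expectation Y = 0"
    using assms(4,5,6) by (simp_all add: Y_def)
  define S where "S k \<omega> = (\<Sum>j=1..2^k. X k j \<omega>)" for k \<omega>
  have Sm: "S k \<in> borel_measurable M" for k
    unfolding S_def[abs_def] by (intro borel_measurable_sum meas) auto
  define Cr where "Cr \<rho> = expectation (\<lambda>\<omega>. Y \<omega>^2 * exp (\<rho> * \<bar>Y \<omega>\<bar>) / 2)" for \<rho>
  have Cr0: "Cr \<rho> \<ge> 0" for \<rho> unfolding Cr_def by (intro integral_nonneg_AE) auto
  have mgfS: "(\<integral>\<^sup>+\<omega>. ennreal (exp (t * S k \<omega>)) \<partial>M) \<le> ennreal (exp (Cr \<rho> * t^2 / 2^k))"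
    if "0 < \<rho>" "\<rho> < \<beta>0" "\<bar>t\<bar> \<le> \<rho> * 2^k" for \<rho> k t
    unfolding S_def Cr_def
    by (rule level_mgf[OF Ym Yi that(1,2) meas _ assms(8) that(3)]) (use assms(7) in \<open>auto simp: Y_def\<close>)
  have mgfI: "integrable M (\<lambda>\<omega>. exp (t * S k \<omega>)) \<and> expectation (\<lambda>\<omega>. exp (t * S k \<omega>)) \<le> exp (Cr \<rho> * t^2 / 2^k)"
    if "0 < \<rho>" "\<rho> < \<beta>0" "\<bar>t\<bar> \<le> \<rho> * 2^k" for \<rho> k t
    using nn_bound_integrable[OF _ _ mgfS[OF that]] Sm by auto

  define \<rho>0 where "\<rho>0 = \<beta>0 / 2"
  have \<rho>0: "0 < \<rho>0" "\<rho>0 < \<beta>0" using b0 by (auto simp: \<rho>0_def)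
  define D where "D = 2 * Cr \<rho>0 * exp (Cr \<rho>0 * \<rho>0^2)"
  have D0: "D \<ge> 0" using Cr0 by (simp add: D_def)
  have sq: "integrable M (\<lambda>\<omega>. S k \<omega>^2) \<and> expectation (\<lambda>\<omega>. S k \<omega>^2) \<le> D / 2^k" for k
  proof -
    define a where "a = Cr \<rho>0 * \<rho>0^2 / 2^k"
    have a0: "a \<ge> 0" using Cr0 by (simp add: a_def)
    have tk: "\<rho>0 \<le> \<rho>0 * 2^k" using \<rho>0 by simp
    have p: "(\<integral>\<^sup>+\<omega>. ennreal (exp (\<rho>0 * S k \<omega>)) \<partial>M) \<le> ennreal (exp a)"
      using mgfS[OF \<rho>0, of "\<rho>0" k] tk \<rho>0 by (simp add: a_def)
    have n: "(\<integral>\<^sup>+\<omega>. ennreal (exp (- \<rho>0 * S k \<omega>)) \<partial>M) \<le> ennreal (exp a)"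
      using mgfS[OF \<rho>0, of "- \<rho>0" k] tk \<rho>0 by (simp add: a_def)
    note sm = second_moment[OF Sm \<rho>0(1) a0 p n]
    have "2 * a * exp a / \<rho>0^2 \<le> D / 2^k"
    proof -
      have x0: "0 \<le> Cr \<rho>0 * \<rho>0^2" using Cr0 by simp
      have "a \<le> Cr \<rho>0 * \<rho>0^2 / 1" unfolding a_def
        using x0 by (intro divide_left_mono) auto
      hence "a \<le> Cr \<rho>0 * \<rho>0^2" by simp
      hence "exp a \<le> exp (Cr \<rho>0 * \<rho>0^2)" by simp
      hence "2 * a * exp a / \<rho>0^2 \<le> 2 * a * exp (Cr \<rho>0 * \<rho>0^2) / \<rho>0^2"
        using a0 by (intro divide_right_mono mult_left_mono) auto
      also have "\<dots> = D / 2^k" using \<rho>0 by (simp add: a_def D_def field_simps)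
      finally show ?thesis .
    qed
    with sm show ?thesis by auto
  qed
  define b :: "nat \<Rightarrow> real" where "b k = ((3/4)^k + D * (2/3)^k) / 2" for k
  have b0': "b k \<ge> 0" for k using D0 by (simp add: b_def)
  have bs: "summable b"
    unfolding b_def[abs_def]
    by (intro summable_divide summable_add summable_mult summable_geometric) auto
  have ab: "integrable M (\<lambda>\<omega>. \<bar>S k \<omega>\<bar>) \<and> expectation (\<lambda>\<omega>. \<bar>S k \<omega>\<bar>) \<le> b k" for k
  proof -
    have e: "(3/4::real)^k > 0" by simp
    note am = abs_moment[OF Sm conjunct1[OF sq[of k]] conjunct2[OF sq[of k]] e]
    have "(3/4::real)^k/2 + D / 2^k / (2 * (3/4)^k) = b k"
    proof -
      have "(2::real)^k * (3/4)^k = (3/2)^k" by (simp add: power_mult_distrib[symmetric])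
      moreover have "(2/3::real)^k * (3/2)^k = 1" by (simp add: power_mult_distrib[symmetric])
      ultimately show ?thesis unfolding b_def by (simp add: field_simps)
    qed
    with am show ?thesis by auto
  qed
  have nnS: "(\<integral>\<^sup>+\<omega>. (\<Sum>k. ennreal \<bar>S k \<omega>\<bar>) \<partial>M) \<le> ennreal (\<Sum>k. b k)"
  proof -
    have "(\<integral>\<^sup>+\<omega>. (\<Sum>k. ennreal \<bar>S k \<omega>\<bar>) \<partial>M) = (\<Sum>k. \<integral>\<^sup>+\<omega>. ennreal \<bar>S k \<omega>\<bar> \<partial>M)"
      using Sm by (intro nn_integral_suminf) auto
    also have "\<dots> \<le> (\<Sum>k. ennreal (b k))"
    proof (intro suminf_le summableI)
      fix k
      have "(\<integral>\<^sup>+\<omega>. ennreal \<bar>S k \<omega>\<bar> \<partial>M) = ennreal (expectation (\<lambda>\<omega>. \<bar>S k \<omega>\<bar>))"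
        using ab[of k] by (intro nn_integral_eq_integral) auto
      also have "\<dots> \<le> ennreal (b k)" using ab[of k] by (intro ennreal_leI) auto
      finally show "(\<integral>\<^sup>+\<omega>. ennreal \<bar>S k \<omega>\<bar> \<partial>M) \<le> ennreal (b k)" .
    qed
    also have "\<dots> = ennreal (\<Sum>k. b k)" using b0' bs by (rule suminf_ennreal2)
    finally show ?thesis .
  qed
  have "AE \<omega> in M. (\<Sum>k. ennreal \<bar>S k \<omega>\<bar>) \<noteq> \<infinity>"
  proof (rule nn_integral_noteq_infinite)
    show "(\<lambda>\<omega>. \<Sum>k. ennreal \<bar>S k \<omega>\<bar>) \<in> borel_measurable M" using Sm by (intro borel_measurable_suminf_order) auto
    show "(\<integral>\<^sup>+\<omega>. (\<Sum>k. ennreal \<bar>S k \<omega>\<bar>) \<partial>M) \<noteq> \<infinity>"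
      using le_less_trans[OF nnS ennreal_less_top] by simp
  qed
  hence conv: "AE \<omega> in M. convergent (\<lambda>n. \<Sum>k\<le>n. S k \<omega>)"
  proof (rule AE_mp, intro AE_I2 impI)
    fix \<omega> assume "(\<Sum>k. ennreal \<bar>S k \<omega>\<bar>) \<noteq> \<infinity>"
    hence "summable (\<lambda>k. \<bar>S k \<omega>\<bar>)" by (intro summable_suminf_not_top) auto
    hence "summable (\<lambda>k. S k \<omega>)" by (rule summable_rabs_cancel)
    thus "convergent (\<lambda>n. \<Sum>k\<le>n. S k \<omega>)" by (simp add: summable_iff_convergent')
  qed

  have expm: "integrable M (\<lambda>\<omega>. exp (\<beta> * lim (\<lambda>n. \<Sum>k\<le>n. S k \<omega>)))"
    if \<beta>: "\<bar>\<beta>\<bar> < \<beta>0 / 2" for \<beta>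
  proof -
    define \<rho> where "\<rho> = \<bar>\<beta>\<bar> + \<beta>0 / 2"
    have r1: "0 < \<rho>" unfolding \<rho>_def using \<beta> b0 abs_ge_zero[of \<beta>] by linarith
    have r2: "\<rho> < \<beta>0" unfolding \<rho>_def using \<beta> b0 abs_ge_zero[of \<beta>] by linarith
    have r3: "2 * \<bar>\<beta>\<bar> < \<rho>" unfolding \<rho>_def using \<beta> b0 abs_ge_zero[of \<beta>] by linarith
    note \<rho> = r1 r2 r3
    define c where "c = (1 - 2 * \<bar>\<beta>\<bar> / \<rho>) / 4"
    have "2 * \<bar>\<beta>\<bar> / \<rho> < 1" using \<rho> by (simp add: divide_less_eq)
    hence c: "c > 0" unfolding c_def by simp
    define w :: "nat \<Rightarrow> real" where "w k = \<bar>\<beta>\<bar> / (\<rho> * 2^k) + c * (3/4)^k" for k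
    define t where "t k = \<beta> / w k" for k
    have wc: "w k \<ge> c * (3/4)^k" for k
    proof -
      have "0 \<le> \<bar>\<beta>\<bar> / (\<rho> * 2^k)" using \<rho> by simp
      thus ?thesis unfolding w_def by linarith
    qed
    have wpos: "w k > 0" for k
    proof -
      have "0 < c * (3/4::real)^k" using c by simp
      thus ?thesis using wc[of k] by linarith
    qed
    have wsum: "(\<Sum>k\<le>n. w k) \<le> 1" for n
    proof -
      have g1: "(\<Sum>k\<le>n. (1/2::real)^k) \<le> 2"
        using sum_le_suminf[OF summable_geometric[of "1/2::real"], of "{..n}"] suminf_geometric[of "1/2::real"]
        by auto
      have g2: "(\<Sum>k\<le>n. (3/4::real)^k) \<le> 4"
        using sum_le_suminf[OF summable_geometric[of "3/4::real"], of "{..n}"] suminf_geometric[of "3/4::real"]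
        by auto
      have "(\<Sum>k\<le>n. w k) = \<bar>\<beta>\<bar> / \<rho> * (\<Sum>k\<le>n. (1/2::real)^k) + c * (\<Sum>k\<le>n. (3/4::real)^k)"
      proof -
        have wk: "w k = \<bar>\<beta>\<bar> / \<rho> * (1/2::real)^k + c * (3/4::real)^k" for k
          by (simp add: w_def power_one_over)
        show ?thesis by (simp only: wk sum.distrib sum_distrib_left)
      qed
      also have "\<dots> \<le> \<bar>\<beta>\<bar> / \<rho> * 2 + c * 4"
        using g1 g2 c \<rho> by (intro add_mono mult_left_mono) auto
      also have "\<dots> = 1" using \<rho> by (simp add: c_def field_simps)
      finally show ?thesis .
    qed
    define E0 where "E0 = exp (Cr \<rho> * \<beta>^2 / c^2)"
    have tb: "\<bar>t k\<bar> \<le> \<rho> * 2^k" for k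
    proof (cases "\<beta> = 0")
      case True thus ?thesis using \<rho> by (simp add: t_def)
    next
      case False
      have "\<bar>\<beta>\<bar> / (\<rho> * 2^k) \<le> w k" using c by (simp add: w_def)
      hence "\<bar>\<beta>\<bar> / w k \<le> \<bar>\<beta>\<bar> / (\<bar>\<beta>\<bar> / (\<rho> * 2^k))"
        using False \<rho> wpos[of k] by (intro divide_left_mono) auto
      thus ?thesis using False wpos[of k] by (simp add: t_def abs_divide)
    qed
    have tE: "integrable M (\<lambda>\<omega>. exp (t k * S k \<omega>)) \<and> expectation (\<lambda>\<omega>. exp (t k * S k \<omega>)) \<le> E0" for k
    proof -
      have "t k ^ 2 / 2^k \<le> \<beta>^2 / c^2"
      proof -
        have "c^2 \<le> c^2 * (9/8::real)^k" using c by simp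
        also have "\<dots> = (c * (3/4)^k)^2 * 2^k"
        proof -
          have "((3/4::real)^k)^2 * 2^k = ((3/4)^2 * 2)^k"
            by (simp add: power_mult_distrib power_mult[symmetric] mult.commute[of k])
          also have "(3/4::real)^2 * 2 = 9/8" by (simp add: power2_eq_square)
          finally show ?thesis by (simp add: power_mult_distrib)
        qed
        also have "\<dots> \<le> w k ^ 2 * 2^k"
          using wc[of k] c by (intro mult_right_mono power_mono) auto
        finally have "c^2 \<le> w k ^ 2 * 2^k" .
        hence "\<beta>^2 / (w k ^ 2 * 2^k) \<le> \<beta>^2 / c^2"
          using c wpos[of k] by (intro divide_left_mono) auto
        thus ?thesis by (simp add: t_def power_divide)
      qed
      hence "Cr \<rho> * (t k ^ 2 / 2^k) \<le> Cr \<rho> * (\<beta>^2 / c^2)"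
        using Cr0[of \<rho>] by (rule mult_left_mono)
      hence "Cr \<rho> * t k ^ 2 / 2^k \<le> Cr \<rho> * \<beta>^2 / c^2" by simp
      hence "exp (Cr \<rho> * t k ^ 2 / 2^k) \<le> E0" by (simp add: E0_def)
      thus ?thesis using mgfI[OF \<rho>(1,2) tb[of k]] by (blast intro: order_trans)
    qed
    have E00: "E0 \<ge> 0" by (simp add: E0_def)
    have bnd: "(\<integral>\<^sup>+\<omega>. ennreal (exp (\<beta> * (\<Sum>k\<le>n. S k \<omega>))) \<partial>M) \<le> ennreal (E0 + 1)" for n
    proof -
      define R where "R \<omega> = (\<Sum>k\<le>n. w k * exp (t k * S k \<omega>)) + (1 - (\<Sum>k\<le>n. w k))" for \<omega>
      have pt: "exp (\<beta> * (\<Sum>k\<le>n. S k \<omega>)) \<le> R \<omega>" for \<omega>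
      proof -
        have "\<beta> * (\<Sum>k\<le>n. S k \<omega>) = (\<Sum>k\<le>n. w k * (t k * S k \<omega>))"
          unfolding sum_distrib_left t_def using wpos by (intro sum.cong) (auto simp: less_imp_neq[symmetric])
        thus ?thesis unfolding R_def using exp_convex_sum[of n w, OF _ wsum] wpos
          by (simp add: less_imp_le)
      qed
      have Ri: "integrable M R"
        unfolding R_def[abs_def] using tE
        by (intro Bochner_Integration.integrable_add integrable_sum integrable_mult_right integrable_const) auto
      have "(\<integral>\<^sup>+\<omega>. ennreal (exp (\<beta> * (\<Sum>k\<le>n. S k \<omega>))) \<partial>M) \<le> (\<integral>\<^sup>+\<omega>. ennreal (R \<omega>) \<partial>M)"
        by (intro nn_integral_mono ennreal_leI pt)
      also have "\<dots> = ennreal (expectation R)"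
        using Ri pt by (intro nn_integral_eq_integral) (auto intro: order_trans[OF less_imp_le[OF exp_gt_zero]])
      also have "expectation R = (\<Sum>k\<le>n. w k * expectation (\<lambda>\<omega>. exp (t k * S k \<omega>))) + (1 - (\<Sum>k\<le>n. w k))"
        unfolding R_def[abs_def] using tE
        by (simp add: Bochner_Integration.integral_add integral_sum integrable_sum prob_space)
      also have "\<dots> \<le> (\<Sum>k\<le>n. w k * E0) + 1"
        using tE wpos sum_nonneg[of "{..n}" w] by (intro add_mono sum_mono mult_left_mono) (auto simp: less_imp_le)
      also have "\<dots> \<le> E0 + 1"
        using wsum[of n] E00 by (simp add: sum_distrib_right[symmetric] mult_left_le_one_le sum_nonneg wpos less_imp_le)
      finally show ?thesis by (simp add: ennreal_leI)
    qed
    define L where "L \<omega> = lim (\<lambda>n. \<Sum>k\<le>n. S k \<omega>)" for \<omega>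
    have Lm: "L \<in> borel_measurable M"
      unfolding L_def[abs_def] using Sm by (intro borel_measurable_lim_metric) auto
    have AEl: "AE \<omega> in M. liminf (\<lambda>n. ennreal (exp (\<beta> * (\<Sum>k\<le>n. S k \<omega>)))) = ennreal (exp (\<beta> * L \<omega>))"
      using conv
    proof (rule AE_mp, intro AE_I2 impI)
      fix \<omega> assume "convergent (\<lambda>n. \<Sum>k\<le>n. S k \<omega>)"
      hence "(\<lambda>n. \<Sum>k\<le>n. S k \<omega>) \<longlonglongrightarrow> L \<omega>" by (simp add: L_def convergent_LIMSEQ_iff)
      hence "(\<lambda>n. ennreal (exp (\<beta> * (\<Sum>k\<le>n. S k \<omega>)))) \<longlonglongrightarrow> ennreal (exp (\<beta> * L \<omega>))"
        by (intro tendsto_ennrealI tendsto_exp tendsto_mult tendsto_const)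
      thus "liminf (\<lambda>n. ennreal (exp (\<beta> * (\<Sum>k\<le>n. S k \<omega>)))) = ennreal (exp (\<beta> * L \<omega>))"
        by (intro lim_imp_Liminf) auto
    qed
    have "(\<integral>\<^sup>+\<omega>. ennreal (exp (\<beta> * L \<omega>)) \<partial>M) = (\<integral>\<^sup>+\<omega>. liminf (\<lambda>n. ennreal (exp (\<beta> * (\<Sum>k\<le>n. S k \<omega>)))) \<partial>M)"
      using AEl by (intro nn_integral_cong_AE) (auto elim: AE_mp)
    also have "\<dots> \<le> liminf (\<lambda>n. \<integral>\<^sup>+\<omega>. ennreal (exp (\<beta> * (\<Sum>k\<le>n. S k \<omega>))) \<partial>M)"
      using Sm by (intro nn_integral_liminf) auto
    also have "\<dots> \<le> ennreal (E0 + 1)"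
      by (rule order_trans[OF Liminf_le_Limsup Limsup_bounded]) (auto intro!: always_eventually bnd)
    finally have fin0: "(\<integral>\<^sup>+\<omega>. ennreal (exp (\<beta> * L \<omega>)) \<partial>M) \<le> ennreal (E0 + 1)" .
    have fin: "(\<integral>\<^sup>+\<omega>. ennreal (norm (exp (\<beta> * L \<omega>))) \<partial>M) < \<infinity>"
      using le_less_trans[OF fin0 ennreal_less_top] by simp
    have "integrable M (\<lambda>\<omega>. exp (\<beta> * L \<omega>))"
      unfolding integrable_iff_bounded
    proof (rule conjI[OF _ fin])
      show "(\<lambda>\<omega>. exp (\<beta> * L \<omega>)) \<in> borel_measurable M" using Lm by measurable
    qed
    thus ?thesis by (simp add: L_def)
  qed
  have expm': "\<forall>\<beta>::real. \<bar>\<beta>\<bar> < \<beta>0 / 2 \<longrightarrow> integrable M (\<lambda>\<omega>. exp (\<beta> * lim (\<lambda>n. \<Sum>k\<le>n. S k \<omega>)))"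
    using expm by blast
  show ?thesis
    using conv expm' unfolding S_def by (rule conjI)
qed

end
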